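(* Let $M$ be a connected, oriented, complete hyperbolic three-manifold with universal cover $\tilde M\cong\mathbb{H}^3$, let $\omega$ be a closed one-form on $M$ with lift $\tilde\omega$ to $\tilde M$, and let $b\in\tilde M$. Let $D$ be an ideal view, i.e. the set of outward unit normals to a horosphere $H\subset\tilde M$ (pointing away from the ideal centre of $H$). Identify $H=\pi(D)$ isometrically with $\mathbb{C}$ and write $z_D\in D$ for the normal vector based at the point corresponding to $z\in\mathbb{C}$. Let $d$ be a real number and let $E=\varphi_d(D)$ (again an ideal view), with $\pi(E)$ identified isometrically with $\mathbb{C}$ so that $\varphi_d(z_D)=(e^dz)_E$ for all $z\in\mathbb{C}$. Then for every $R>0$ and every $z\in\mathbb{C}$, \[\Phi^{\omega,b,D}_{R+d}(z_D)=\Phi^{\omega,b,E}_R\big((e^dz)_E\big).\]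
   Context: $\pi\colon \mathrm{UT}\tilde M\to\tilde M$ is the unit tangent bundle projection and $\varphi_t$ is the geodesic flow on $\mathrm{UT}\tilde M$. For a view $D\subset\mathrm{UT}\tilde M$, basepoint $b\in\tilde M$ and $T>0$, the cohomology fractal is $\Phi^{\omega,b,D}_T\colon D\to\mathbb{R}$, $\Phi^{\omega,b,D}_T(v)=\int_0^T\tilde\omega(\varphi_t(v))\,dt+\int_b^{\pi(v)}\tilde\omega$, where a one-form is evaluated on a unit vector $v$ at its basepoint, and the second integral is along any path in $\tilde M$ (well defined since $\tilde\omega$ is closed on the simply connected $\tilde M$). Equivalently $\Phi^{\omega,b,D}_T(v)=W(\pi(\varphi_T(v)))$ where $dW=\tilde\omega$ and $W(b)=0$. *)

theory Defs
  imports "HOL-Analysis.Analysis"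
begin

text \<open>Hyperboloid model of hyperbolic 3-space inside Minkowski space R^(1,3).
  Coordinate 1 is the time coordinate.\<close>

definition mink :: "real^4 \<Rightarrow> real^4 \<Rightarrow> real" where
  "mink x y = - x$1 * y$1 + x$2 * y$2 + x$3 * y$3 + x$4 * y$4"

definition H3 :: "(real^4) set" where
  "H3 = {p. mink p p = -1 \<and> p$1 > 0}"

definition UT :: "((real^4) \<times> (real^4)) set" where
  "UT = {(p, v). p \<in> H3 \<and> mink p v = 0 \<and> mink v v = 1}"

definition gflow :: "real \<Rightarrow> (real^4) \<times> (real^4) \<Rightarrow> (real^4) \<times> (real^4)" where
  "gflow t u = (cosh t *\<^sub>R fst u + sinh t *\<^sub>R snd u, sinh t *\<^sub>R fst u + cosh t *\<^sub>R snd u)"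

definition chart :: "real^3 \<Rightarrow> real^4" where
  "chart x = vector [sqrt (1 + (norm x)\<^sup>2), x$1, x$2, x$3]"

text \<open>A one-form on H3 is represented by  w :: real^4 => real^4 => real, where  w p  is
  (a linear extension of) the covector at p.  It is closed if its pullback along the
  global chart has C^1 coefficients with symmetric Jacobian, i.e. d w = 0.\<close>
definition pullback_coeffs :: "(real^4 \<Rightarrow> real^4 \<Rightarrow> real) \<Rightarrow> real^3 \<Rightarrow> real^3" where
  "pullback_coeffs w x = (\<chi> i. w (chart x) (frechet_derivative chart (at x) (axis i 1)))"

definition closed_one_form :: "(real^4 \<Rightarrow> real^4 \<Rightarrow> real) \<Rightarrow> bool" where
  "closed_one_form w \<longleftrightarrow>
     (\<forall>p\<in>H3. linear (w p)) \<and>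
     (\<exists>D. (\<forall>x. (pullback_coeffs w has_derivative D x) (at x)) \<and>
          (\<forall>i j. continuous_on UNIV (\<lambda>x. D x (axis j 1) $ i)) \<and>
          (\<forall>x i j. D x (axis j 1) $ i = D x (axis i 1) $ j))"

definition line_int :: "(real^4 \<Rightarrow> real^4 \<Rightarrow> real) \<Rightarrow> (real \<Rightarrow> real^4) \<Rightarrow> real" where
  "line_int w \<gamma> = integral {0..1} (\<lambda>t. w (\<gamma> t) (vector_derivative \<gamma> (at t within {0..1})))"

definition C1_path_in :: "(real^4) set \<Rightarrow> real^4 \<Rightarrow> real^4 \<Rightarrow> (real \<Rightarrow> real^4) \<Rightarrow> bool" where
  "C1_path_in S p q \<gamma> \<longleftrightarrow> \<gamma> C1_differentiable_on {0..1} \<and> \<gamma> ` {0..1} \<subseteq> S \<and> \<gamma> 0 = p \<and> \<gamma> 1 = q"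

text \<open>Integral of w from b to p along (any) C^1 path in H3.\<close>
definition int_from :: "(real^4 \<Rightarrow> real^4 \<Rightarrow> real) \<Rightarrow> real^4 \<Rightarrow> real^4 \<Rightarrow> real" where
  "int_from w b p = line_int w (SOME \<gamma>. C1_path_in H3 b p \<gamma>)"

definition sint :: "(real \<Rightarrow> real) \<Rightarrow> real \<Rightarrow> real" where
  "sint f T = (if 0 \<le> T then integral {0..T} f else - integral {T..0} f)"

definition Phi :: "(real^4 \<Rightarrow> real^4 \<Rightarrow> real) \<Rightarrow> real^4 \<Rightarrow> real \<Rightarrow> (real^4) \<times> (real^4) \<Rightarrow> real" where
  "Phi w b T v = sint (\<lambda>t. w (fst (gflow t v)) (snd (gflow t v))) T + int_from w b (fst v)"

text \<open>Horospheres: level sets {p in H3. <p,l> = -c} with l future light-like, c > 0;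
  the ideal centre is the ray of l.\<close>
definition lightlike_future :: "real^4 \<Rightarrow> bool" where
  "lightlike_future l \<longleftrightarrow> mink l l = 0 \<and> l$1 > 0"

definition horosphere :: "real^4 \<Rightarrow> real \<Rightarrow> (real^4) set" where
  "horosphere l c = {p \<in> H3. mink p l = - c}"

text \<open>Unit normal at p pointing away from the ideal centre l.\<close>
definition out_normal :: "real^4 \<Rightarrow> real^4 \<Rightarrow> real^4" where
  "out_normal l p = p + (1 / mink p l) *\<^sub>R l"

definition ideal_view_of :: "real^4 \<Rightarrow> real \<Rightarrow> ((real^4) \<times> (real^4)) set" where
  "ideal_view_of l c = (\<lambda>p. (p, out_normal l p)) ` horosphere l c"

definition ideal_view :: "((real^4) \<times> (real^4)) set \<Rightarrow> bool" where
  "ideal_view D \<longleftrightarrow> (\<exists>l c. lightlike_future l \<and> c > 0 \<and> D = ideal_view_of l c)"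

definition path_len :: "(real \<Rightarrow> real^4) \<Rightarrow> real" where
  "path_len \<gamma> = integral {0..1} (\<lambda>t. sqrt (mink (vector_derivative \<gamma> (at t within {0..1}))
                                           (vector_derivative \<gamma> (at t within {0..1}))))"

definition intrinsic_dist :: "(real^4) set \<Rightarrow> real^4 \<Rightarrow> real^4 \<Rightarrow> real" where
  "intrinsic_dist S p q = Inf {path_len \<gamma> | \<gamma>. C1_path_in S p q \<gamma>}"

definition isometric_ident :: "(complex \<Rightarrow> real^4) \<Rightarrow> (real^4) set \<Rightarrow> bool" where
  "isometric_ident \<iota> S \<longleftrightarrow> bij_betw \<iota> UNIV S \<and>
     (\<forall>z w. intrinsic_dist S (\<iota> z) (\<iota> w) = cmod (z - w))"

definition view_vec :: "((real^4) \<times> (real^4)) set \<Rightarrow> (complex \<Rightarrow> real^4) \<Rightarrow> complex \<Rightarrow> (real^4) \<times> (real^4)" where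
  "view_vec D \<iota> z = (THE u. u \<in> D \<and> fst u = \<iota> z)"

end

theory Submission
  imports Defs
begin

lemma sym_inner:
  fixes Dy :: "real^3 \<Rightarrow> real^3"
  assumes "linear Dy" "\<And>i j. Dy (axis j 1) $ i = Dy (axis i 1) $ j"
  shows "Dy h \<bullet> x = Dy x \<bullet> h"
proof -
  have exp: "\<And>v::real^3. v = v$1 *\<^sub>R axis 1 1 + v$2 *\<^sub>R axis 2 1 + v$3 *\<^sub>R axis 3 1"
    by (simp add: vec_eq_iff forall_3 axis_def)
  have lin: "Dy v = v$1 *\<^sub>R Dy (axis 1 1) + v$2 *\<^sub>R Dy (axis 2 1) + v$3 *\<^sub>R Dy (axis 3 1)" for v :: "real^3"
  proof -
    have "Dy v = Dy (v$1 *\<^sub>R axis 1 1 + v$2 *\<^sub>R axis 2 1 + v$3 *\<^sub>R axis 3 1)"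
      using exp[of v] by simp
    also have "\<dots> = v$1 *\<^sub>R Dy (axis 1 1) + v$2 *\<^sub>R Dy (axis 2 1) + v$3 *\<^sub>R Dy (axis 3 1)"
      using assms(1) by (simp add: linear_add linear_scale)
    finally show ?thesis .
  qed
  show ?thesis
    apply (subst (1 2) lin)
    using assms(2)[of 1 2] assms(2)[of 1 3] assms(2)[of 2 3]
    by (simp add: inner_vec_def sum_3 algebra_simps)
qed

lemma poincare:
  fixes F :: "real^3 \<Rightarrow> real^3" and D :: "real^3 \<Rightarrow> real^3 \<Rightarrow> real^3"
  assumes dF: "\<And>x. (F has_derivative D x) (at x)"
    and cont: "\<And>i j. continuous_on UNIV (\<lambda>x. D x (axis j 1) $ i)"
    and sym: "\<And>x i j. D x (axis j 1) $ i = D x (axis i 1) $ j"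
  shows "\<exists>V. \<forall>x. (V has_derivative (\<lambda>h. F x \<bullet> h)) (at x)"
proof -
  have blD: "bounded_linear (D y)" for y using dF has_derivative_bounded_linear by blast
  have linD: "linear (D y)" for y using blD bounded_linear.linear by blast
  have contF: "continuous_on UNIV F"
    using dF has_derivative_continuous continuous_at_imp_continuous_on by blast
  have contDj: "continuous_on UNIV (\<lambda>x. D x (axis j 1))" for j
  proof -
    have "continuous_on UNIV (\<lambda>x. \<chi> i. D x (axis j 1) $ i)"
      by (intro continuous_on_vec_lambda cont)
    then show ?thesis by simp
  qed
  define f where "f x t = F (t *\<^sub>R x) \<bullet> x" for x :: "real^3" and t :: real
  define g where "g x t = (\<lambda>h. D (t *\<^sub>R x) (t *\<^sub>R h) \<bullet> x + F (t *\<^sub>R x) \<bullet> h)" for x :: "real^3" and t :: real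
  define fx where "fx x t = Blinfun (g x t)" for x t
  have blg: "bounded_linear (g x t)" for x t
    unfolding g_def
    by (intro bounded_linear_add bounded_linear_inner_left_comp bounded_linear_inner_right
        bounded_linear_compose[OF blD] bounded_linear_scaleR_right)
  have fx_apply: "blinfun_apply (fx x t) = g x t" for x t
    unfolding fx_def using blg bounded_linear_Blinfun_apply by blast
  have deriv_f: "((\<lambda>x. f x t) has_derivative blinfun_apply (fx x t)) (at x within UNIV)" for x t
  proof -
    have d1: "((\<lambda>x. F (t *\<^sub>R x)) has_derivative (\<lambda>h. D (t *\<^sub>R x) (t *\<^sub>R h))) (at x)"
      by (rule has_derivative_compose[OF _ dF]) (intro derivative_intros)
    show ?thesis
      unfolding fx_apply f_def g_def
      by (rule has_derivative_eq_rhs[OF has_derivative_inner[OF d1 has_derivative_ident]])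
         (auto simp: inner_commute)
  qed
  have contfx: "continuous_on (UNIV \<times> cbox 0 1) (\<lambda>(x, t). fx x t)"
  proof (rule continuous_on_blinfun_componentwise)
    fix i :: "real^3" assume "i \<in> Basis"
    then obtain j where i: "i = axis j 1" by (auto simp: Basis_vec_def)
    have eq: "(\<lambda>xt. blinfun_apply ((\<lambda>(x, t). fx x t) xt) i) =
       (\<lambda>xt. snd xt * (D (snd xt *\<^sub>R fst xt) (axis j 1) \<bullet> fst xt) + F (snd xt *\<^sub>R fst xt) \<bullet> axis j 1)"
      by (auto simp: fx_apply g_def i linear_scale[OF linD])
    show "continuous_on (UNIV \<times> cbox 0 1) (\<lambda>xt. blinfun_apply ((\<lambda>(x, t). fx x t) xt) i)"
      unfolding eq
      by (intro continuous_intros continuous_on_compose2[OF contDj] continuous_on_compose2[OF contF]) auto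
  qed
  define V where "V x = integral (cbox 0 1) (f x)" for x
  have "(V has_derivative (\<lambda>h. F x \<bullet> h)) (at x)" for x
  proof -
    have intf: "f x integrable_on cbox 0 1" for x
      unfolding f_def cbox_interval
      by (intro integrable_continuous_interval continuous_intros continuous_on_compose2[OF contF]) auto
    have L: "(V has_derivative blinfun_apply (integral (cbox 0 1) (fx x))) (at x within UNIV)"
      unfolding V_def
      by (rule leibniz_rule[OF deriv_f intf contfx]) auto
    have intfx: "fx x integrable_on cbox 0 1"
      proof (rule integrable_continuous)
      have "continuous_on (cbox 0 1) (\<lambda>t. (\<lambda>(x, t). fx x t) (x, t))"
        by (rule continuous_on_compose2[OF contfx]) (auto intro!: continuous_intros)
      then show "continuous_on (cbox 0 1) (fx x)" by simp
    qed
    have val: "blinfun_apply (integral (cbox 0 1) (fx x)) h = F x \<bullet> h" for h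
    proof -
      define G where "G t = t * (F (t *\<^sub>R x) \<bullet> h)" for t
      have dG: "(G has_vector_derivative g x t h) (at t within {0..1})" for t
      proof -
        have d1: "((\<lambda>t. F (t *\<^sub>R x)) has_derivative (\<lambda>s. D (t *\<^sub>R x) (s *\<^sub>R x))) (at t within {0..1})"
          by (rule has_derivative_compose[OF _ dF]) (intro derivative_intros)
        have "(G has_derivative (\<lambda>s. t * (D (t *\<^sub>R x) (s *\<^sub>R x) \<bullet> h) + s * (F (t *\<^sub>R x) \<bullet> h))) (at t within {0..1})"
          unfolding G_def
          by (rule has_derivative_eq_rhs, (rule derivative_intros d1)+) auto
        moreover have "(\<lambda>s. t * (D (t *\<^sub>R x) (s *\<^sub>R x) \<bullet> h) + s * (F (t *\<^sub>R x) \<bullet> h)) = (\<lambda>s. s *\<^sub>R g x t h)"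
          using sym_inner[OF linD sym, of "t *\<^sub>R x" h x]
          by (auto simp: g_def linear_scale[OF linD] algebra_simps fun_eq_iff)
        ultimately show ?thesis by (simp add: has_vector_derivative_def)
      qed
      have "((\<lambda>t. g x t h) has_integral G 1 - G 0) {0..1}"
        by (rule fundamental_theorem_of_calculus) (auto intro: dG)
      then have "integral {0..1} (\<lambda>t. g x t h) = F x \<bullet> h"
        by (simp add: G_def integral_unique)
      then show ?thesis
        using blinfun_apply_integral[OF intfx] by (simp add: fx_apply)
    qed
    have "blinfun_apply (integral (cbox 0 1) (fx x)) = (\<lambda>h. F x \<bullet> h)" using val by (simp add: fun_eq_iff)
    then show ?thesis using L by simp
  qed
  then show ?thesis by blast
qed

definition proj :: "real^4 \<Rightarrow> real^3" where
  "proj p = p$2 *\<^sub>R axis 1 1 + p$3 *\<^sub>R axis 2 1 + p$4 *\<^sub>R axis 3 1"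

definition Dc :: "real^3 \<Rightarrow> real^3 \<Rightarrow> real^4" where
  "Dc x h = ((x \<bullet> h) / sqrt (1 + (norm x)\<^sup>2)) *\<^sub>R axis 1 1 + h$1 *\<^sub>R axis 2 1 + h$2 *\<^sub>R axis 3 1 + h$3 *\<^sub>R axis 4 1"

lemma vector4_eq: "(vector [a, b, c, d] :: real^4) = a *\<^sub>R axis 1 1 + b *\<^sub>R axis 2 1 + c *\<^sub>R axis 3 1 + d *\<^sub>R axis 4 1"
  unfolding vector_def by (simp add: vec_eq_iff forall_4 axis_def)

lemma chart_eq: "chart x = sqrt (1 + (norm x)\<^sup>2) *\<^sub>R axis 1 1 + x$1 *\<^sub>R axis 2 1 + x$2 *\<^sub>R axis 3 1 + x$3 *\<^sub>R axis 4 1"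
  unfolding chart_def vector4_eq ..

lemma ax4 [simp]:
  "(axis 1 1 :: real^4) $ 1 = 1" "(axis 1 1 :: real^4) $ 2 = 0" "(axis 1 1 :: real^4) $ 3 = 0" "(axis 1 1 :: real^4) $ 4 = 0"
  "(axis 2 1 :: real^4) $ 1 = 0" "(axis 2 1 :: real^4) $ 2 = 1" "(axis 2 1 :: real^4) $ 3 = 0" "(axis 2 1 :: real^4) $ 4 = 0"
  "(axis 3 1 :: real^4) $ 1 = 0" "(axis 3 1 :: real^4) $ 2 = 0" "(axis 3 1 :: real^4) $ 3 = 1" "(axis 3 1 :: real^4) $ 4 = 0"
  "(axis 4 1 :: real^4) $ 1 = 0" "(axis 4 1 :: real^4) $ 2 = 0" "(axis 4 1 :: real^4) $ 3 = 0" "(axis 4 1 :: real^4) $ 4 = 1"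
  by (simp_all add: axis_def)

lemma ax3 [simp]:
  "(axis 1 1 :: real^3) $ 1 = 1" "(axis 1 1 :: real^3) $ 2 = 0" "(axis 1 1 :: real^3) $ 3 = 0"
  "(axis 2 1 :: real^3) $ 1 = 0" "(axis 2 1 :: real^3) $ 2 = 1" "(axis 2 1 :: real^3) $ 3 = 0"
  "(axis 3 1 :: real^3) $ 1 = 0" "(axis 3 1 :: real^3) $ 2 = 0" "(axis 3 1 :: real^3) $ 3 = 1"
  by (simp_all add: axis_def)

lemma norm3: "(norm (x::real^3))\<^sup>2 = (x$1)\<^sup>2 + (x$2)\<^sup>2 + (x$3)\<^sup>2"
proof -
  have "(norm x)\<^sup>2 = x \<bullet> x" by (rule power2_norm_eq_inner)
  then show ?thesis by (simp add: inner_vec_def sum_3 power2_eq_square)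
qed

lemma norm_pos1: "1 + (norm (x::'a::real_normed_vector))\<^sup>2 > 0"
  by (smt (verit) zero_le_power2)

lemma norm_ne1 [simp]: "1 + (norm (x::'a::real_normed_vector))\<^sup>2 \<noteq> 0"
  by (smt (verit) zero_le_power2)

lemma bl_nth_scale: "bounded_linear (\<lambda>x::real^'n. x$i *\<^sub>R c)"
  by (rule bounded_linear_compose[OF bounded_linear_scaleR_left bounded_linear_vec_nth])

lemma chart_H3: "chart x \<in> H3"
proof -
  define s where "s = sqrt (1 + (norm x)\<^sup>2)"
  have ss: "s * s = 1 + (norm x)\<^sup>2"
    unfolding s_def by (metis abs_of_pos real_sqrt_mult_self norm_pos1)
  have sp: "s > 0" unfolding s_def using norm_pos1[of x] by simp
  have c: "chart x $ 1 = s" "chart x $ 2 = x$1" "chart x $ 3 = x$2" "chart x $ 4 = x$3"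
    by (simp_all add: chart_eq s_def)
  have n: "(norm x)\<^sup>2 = x$1 * x$1 + x$2 * x$2 + x$3 * x$3" using norm3[of x] by (simp add: power2_eq_square)
  show ?thesis
    unfolding H3_def mink_def mem_Collect_eq c using ss sp n by linarith
qed

lemma proj_chart [simp]: "proj (chart x) = x"
  by (simp add: proj_def chart_eq vec_eq_iff forall_3)

lemma chart_proj: assumes "p \<in> H3" shows "chart (proj p) = p"
proof -
  have m: "- p$1 * p$1 + p$2 * p$2 + p$3 * p$3 + p$4 * p$4 = -1" and pos: "p$1 > 0"
    using assms by (auto simp: H3_def mink_def)
  have "1 + (norm (proj p))\<^sup>2 = (p$1)\<^sup>2"
    unfolding norm3 using m by (simp add: proj_def power2_eq_square)
  then have "sqrt (1 + (norm (proj p))\<^sup>2) = p$1" using pos by simp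
  then show ?thesis
    by (simp add: chart_eq proj_def vec_eq_iff forall_4)
qed

lemma bl_proj: "bounded_linear proj"
  unfolding proj_def
  by (intro bounded_linear_add bl_nth_scale)

lemma chart_deriv: "(chart has_derivative Dc x) (at x within S)"
proof -
  have pos: "0 < 1 + (norm x)\<^sup>2" by (simp add: add_pos_nonneg)
  have n: "(\<lambda>x::real^3. 1 + (norm x)\<^sup>2) = (\<lambda>x. 1 + x \<bullet> x)" by (simp add: power2_norm_eq_inner)
  have d1: "((\<lambda>x::real^3. 1 + (norm x)\<^sup>2) has_derivative (\<lambda>h. 2 * (x \<bullet> h))) (at x within S)"
    unfolding n
    by (rule has_derivative_eq_rhs, (rule derivative_intros)+) (auto simp: inner_commute)
  have d2: "((\<lambda>x::real^3. sqrt (1 + (norm x)\<^sup>2)) has_derivative (\<lambda>h. (x \<bullet> h) / sqrt (1 + (norm x)\<^sup>2))) (at x within S)"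
    by (rule has_derivative_eq_rhs[OF has_derivative_real_sqrt[OF pos d1]]) (auto simp: divide_simps)
  have dn: "((\<lambda>x::real^3. x $ i) has_derivative (\<lambda>h. h $ i)) (at x within S)" for i
    using bounded_linear_vec_nth bounded_linear.has_derivative has_derivative_ident by blast
  show ?thesis
    unfolding chart_eq[abs_def] Dc_def
    by (intro derivative_intros d2 dn)
qed

lemma linear_Dc: "linear (Dc x)"
  using chart_deriv[of x UNIV] has_derivative_linear by blast

lemma frechet_chart: "frechet_derivative chart (at x) = Dc x"
  using chart_deriv[of x UNIV] frechet_derivative_at by (metis)

lemma cont_Dc: "continuous_on S (\<lambda>t. Dc (f t) c)" if "continuous_on S f"
  unfolding Dc_def
  by (intro continuous_intros that) simp

lemma expand3: "(v::real^3) = v$1 *\<^sub>R axis 1 1 + v$2 *\<^sub>R axis 2 1 + v$3 *\<^sub>R axis 3 1"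
  by (simp add: vec_eq_iff forall_3)

lemma w_Dc:
  assumes "linear (w (chart x))"
  shows "w (chart x) (Dc x v) = pullback_coeffs w x \<bullet> v"
proof -
  have "Dc x v = Dc x (v$1 *\<^sub>R axis 1 1 + v$2 *\<^sub>R axis 2 1 + v$3 *\<^sub>R axis 3 1)"
    using expand3[of v] by simp
  also have "\<dots> = v$1 *\<^sub>R Dc x (axis 1 1) + v$2 *\<^sub>R Dc x (axis 2 1) + v$3 *\<^sub>R Dc x (axis 3 1)"
    using linear_Dc[of x] by (simp add: linear_add linear_scale)
  finally have e: "Dc x v = \<dots>" .
  have "w (chart x) (Dc x v) = v$1 * w (chart x) (Dc x (axis 1 1)) + v$2 * w (chart x) (Dc x (axis 2 1))
      + v$3 * w (chart x) (Dc x (axis 3 1))"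
    unfolding e using assms by (simp add: linear_add linear_scale)
  then show ?thesis
    by (simp add: pullback_coeffs_def frechet_chart inner_vec_def sum_3 mult.commute)
qed

lemma KL:
  assumes lin: "\<forall>p\<in>H3. linear (w p)"
    and V: "\<forall>x. (V has_derivative (\<lambda>h. pullback_coeffs w x \<bullet> h)) (at x)"
    and nb: "at t within S \<noteq> bot" and tS: "t \<in> S" and H: "\<forall>s\<in>S. \<gamma> s \<in> H3"
    and d: "(\<gamma> has_vector_derivative \<gamma>') (at t within S)"
  shows "((\<lambda>s. V (proj (\<gamma> s))) has_vector_derivative w (\<gamma> t) \<gamma>') (at t within S)"
proof -
  have linp: "linear proj" using bl_proj bounded_linear.linear by blast
  have dB: "((\<lambda>s. proj (\<gamma> s)) has_vector_derivative proj \<gamma>') (at t within S)"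
    using has_derivative_compose[OF d[unfolded has_vector_derivative_def] bounded_linear.has_derivative[OF bl_proj has_derivative_ident]]
    unfolding has_vector_derivative_def by (simp add: linear_scale[OF linp])
  have dC: "((\<lambda>s. chart (proj (\<gamma> s))) has_vector_derivative Dc (proj (\<gamma> t)) (proj \<gamma>')) (at t within S)"
    using has_derivative_compose[OF dB[unfolded has_vector_derivative_def] chart_deriv[of _ UNIV]]
    unfolding has_vector_derivative_def by (simp add: linear_scale[OF linear_Dc])
  have dG: "(\<gamma> has_vector_derivative Dc (proj (\<gamma> t)) (proj \<gamma>')) (at t within S)"
    by (rule has_vector_derivative_transform[OF tS _ dC]) (use H chart_proj in auto)
  have g': "\<gamma>' = Dc (proj (\<gamma> t)) (proj \<gamma>')"
    using vector_derivative_unique_within[OF nb d dG] .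
  have dV: "((\<lambda>s. V (proj (\<gamma> s))) has_vector_derivative pullback_coeffs w (proj (\<gamma> t)) \<bullet> proj \<gamma>') (at t within S)"
    using has_derivative_compose[OF dB[unfolded has_vector_derivative_def] V[rule_format]]
    unfolding has_vector_derivative_def by (simp add: algebra_simps)
  have ct: "chart (proj (\<gamma> t)) = \<gamma> t" using H tS chart_proj by auto
  have "w (\<gamma> t) \<gamma>' = pullback_coeffs w (proj (\<gamma> t)) \<bullet> proj \<gamma>'"
    using w_Dc[of w "proj (\<gamma> t)" "proj \<gamma>'"] lin H tS ct g' by auto
  then show ?thesis using dV by simp
qed

lemma not_bot01: "t \<in> {0..1::real} \<Longrightarrow> at t within {0..1} \<noteq> bot"
proof -
  assume t: "t \<in> {0..1::real}"
  have "t islimpt {0..1::real}" using islimpt_Icc[of 0 1 t] t by simp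
  then show ?thesis using trivial_limit_within by blast
qed

lemma line_int_eq:
  assumes lin: "\<forall>p\<in>H3. linear (w p)"
    and V: "\<forall>x. (V has_derivative (\<lambda>h. pullback_coeffs w x \<bullet> h)) (at x)"
    and C: "C1_path_in H3 p q \<gamma>"
  shows "line_int w \<gamma> = V (proj q) - V (proj p)"
proof -
  from C obtain D where der0: "\<forall>v\<in>{0..1}. (\<gamma> has_vector_derivative D v) (at v)"
    unfolding C1_path_in_def C1_differentiable_on_def by blast
  then have der: "\<And>v. v \<in> {0..1} \<Longrightarrow> (\<gamma> has_vector_derivative D v) (at v)" by blast
  have H: "\<forall>s\<in>{0..1}. \<gamma> s \<in> H3" and e: "\<gamma> 0 = p" "\<gamma> 1 = q"
    using C unfolding C1_path_in_def by auto
  have vd: "vector_derivative \<gamma> (at t within {0..1}) = D t" if "t \<in> {0..1}" for t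
    using vector_derivative_at_within_ivl[OF der[OF that]] that by auto
  have "((\<lambda>t. w (\<gamma> t) (D t)) has_integral V (proj (\<gamma> 1)) - V (proj (\<gamma> 0))) {0..1}"
  proof (rule fundamental_theorem_of_calculus[where f="\<lambda>s. V (proj (\<gamma> s))"])
    fix t :: real assume t: "t \<in> {0..1}"
    show "((\<lambda>s. V (proj (\<gamma> s))) has_vector_derivative w (\<gamma> t) (D t)) (at t within {0..1})"
      by (rule KL[OF lin V not_bot01[OF t] t H has_vector_derivative_at_within[OF der[OF t]]])
  qed simp
  then have "integral {0..1} (\<lambda>t. w (\<gamma> t) (D t)) = V (proj q) - V (proj p)"
    using e integral_unique by auto
  moreover have "integral {0..1} (\<lambda>t. w (\<gamma> t) (vector_derivative \<gamma> (at t within {0..1})))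
      = integral {0..1} (\<lambda>t. w (\<gamma> t) (D t))"
    by (rule integral_cong) (simp add: vd)
  ultimately show ?thesis unfolding line_int_def by simp
qed

lemma path_exists:
  assumes "p \<in> H3" "q \<in> H3"
  shows "\<exists>\<gamma>. C1_path_in H3 p q \<gamma>"
proof -
  define \<beta> where "\<beta> t = proj p + t *\<^sub>R (proj q - proj p)" for t :: real
  define \<gamma> where "\<gamma> t = chart (\<beta> t)" for t
  have dB: "(\<beta> has_derivative (\<lambda>s. s *\<^sub>R (proj q - proj p))) (at t)" for t
    unfolding \<beta>_def by (rule has_derivative_eq_rhs, (rule derivative_intros)+) auto
  have dG: "(\<gamma> has_vector_derivative Dc (\<beta> t) (proj q - proj p)) (at t)" for t
    using has_derivative_compose[OF dB chart_deriv[of _ UNIV]]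
    unfolding has_vector_derivative_def \<gamma>_def by (simp add: linear_scale[OF linear_Dc])
  have cB: "continuous_on {0..1} \<beta>" unfolding \<beta>_def by (intro continuous_intros)
  have "\<gamma> C1_differentiable_on {0..1}"
    unfolding C1_differentiable_on_def
    by (rule exI[of _ "\<lambda>t. Dc (\<beta> t) (proj q - proj p)"]) (use dG cont_Dc[OF cB] in blast)
  moreover have "\<gamma> ` {0..1} \<subseteq> H3" using chart_H3 \<gamma>_def by auto
  moreover have "\<gamma> 0 = p" "\<gamma> 1 = q" using assms chart_proj by (auto simp: \<gamma>_def \<beta>_def)
  ultimately show ?thesis unfolding C1_path_in_def by blast
qed

lemma int_from_eq:
  assumes lin: "\<forall>p\<in>H3. linear (w p)"
    and V: "\<forall>x. (V has_derivative (\<lambda>h. pullback_coeffs w x \<bullet> h)) (at x)"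
    and "b \<in> H3" "q \<in> H3"
  shows "int_from w b q = V (proj q) - V (proj b)"
proof -
  have "C1_path_in H3 b q (SOME \<gamma>. C1_path_in H3 b q \<gamma>)"
    using path_exists[OF assms(3,4)] by (rule someI_ex)
  then show ?thesis unfolding int_from_def using line_int_eq[OF lin V] by blast
qed

lemma mink_add_left: "mink (x + y) z = mink x z + mink y z"
  and mink_add_right: "mink z (x + y) = mink z x + mink z y"
  and mink_scale_left: "mink (a *\<^sub>R x) z = a * mink x z"
  and mink_scale_right: "mink z (a *\<^sub>R x) = a * mink z x"
  and mink_sym: "mink x z = mink z x"
  and mink_diff_left: "mink (x - y) z = mink x z - mink y z"
  and mink_diff_right: "mink z (x - y) = mink z x - mink z y"
  by (simp_all add: mink_def algebra_simps)

lemma time_bound: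
  assumes "p \<in> H3" "mink p v = 0" "mink v v = 1"
  shows "\<bar>v$1\<bar> < p$1"
proof -
  have m1: "- p$1 * p$1 + p$2 * p$2 + p$3 * p$3 + p$4 * p$4 = -1" and pos: "p$1 > 0"
    using assms(1) by (auto simp: H3_def mink_def)
  have m2: "- p$1 * v$1 + p$2 * v$2 + p$3 * v$3 + p$4 * v$4 = 0"
    using assms(2) by (simp add: mink_def)
  have m3: "- v$1 * v$1 + v$2 * v$2 + v$3 * v$3 + v$4 * v$4 = 1"
    using assms(3) by (simp add: mink_def)
  define A where "A = p$2 * p$2 + p$3 * p$3 + p$4 * p$4"
  define B where "B = v$2 * v$2 + v$3 * v$3 + v$4 * v$4"
  define C where "C = p$2 * v$2 + p$3 * v$3 + p$4 * v$4"
  have lag: "A * B - C * C = (p$2 * v$3 - p$3 * v$2)\<^sup>2 + (p$2 * v$4 - p$4 * v$2)\<^sup>2 + (p$3 * v$4 - p$4 * v$3)\<^sup>2"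
    unfolding A_def B_def C_def by (simp add: power2_eq_square algebra_simps)
  have cs: "C * C \<le> A * B" using lag
    by (smt (verit) zero_le_power2)
  have eA: "A = p$1 * p$1 - 1" using m1 A_def by linarith
  have eB: "B = v$1 * v$1 + 1" using m3 B_def by linarith
  have eC: "C = p$1 * v$1" using m2 C_def by linarith
  have "(p$1 * v$1) * (p$1 * v$1) \<le> (p$1 * p$1 - 1) * (v$1 * v$1 + 1)"
    using cs eA eB eC by simp
  then have "v$1 * v$1 \<le> p$1 * p$1 - 1" by (simp add: algebra_simps)
  then have "\<bar>v$1\<bar>\<^sup>2 < (p$1)\<^sup>2" by (simp add: power2_eq_square)
  then show ?thesis using pos by (smt (verit) power_mono abs_ge_zero)
qed

lemma cosh_gt_abs_sinh: "\<bar>sinh t\<bar> < cosh (t::real)"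
proof -
  have "(cosh t)\<^sup>2 = (sinh t)\<^sup>2 + 1" by (rule cosh_square_eq)
  then have "\<bar>sinh t\<bar>\<^sup>2 < (cosh t)\<^sup>2" by simp
  moreover have "cosh t > 0" by simp
  ultimately show ?thesis by (smt (verit) power_mono abs_ge_zero)
qed

lemma pos_comb:
  fixes a b c d :: real
  assumes "\<bar>b\<bar> < a" "\<bar>d\<bar> < c"
  shows "c * a + d * b > 0"
proof -
  have "\<bar>d\<bar> * a < c * a" using assms by (intro mult_strict_right_mono) auto
  moreover have "\<bar>d\<bar> * \<bar>b\<bar> \<le> \<bar>d\<bar> * a" using assms by (intro mult_left_mono) auto
  moreover have "- (d * b) \<le> \<bar>d\<bar> * \<bar>b\<bar>" by (simp add: abs_mult[symmetric])
  ultimately show ?thesis by linarith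
qed

lemma gflow_UT:
  assumes "u \<in> UT" shows "gflow t u \<in> UT"
proof -
  obtain p v where u: "u = (p, v)" by (cases u)
  have H: "p \<in> H3" and pv: "mink p v = 0" and vv: "mink v v = 1" using assms u by (auto simp: UT_def)
  have pp: "mink p p = -1" and pos: "p$1 > 0" using H by (auto simp: H3_def)
  have vp: "mink v p = 0" using pv mink_sym by metis
  have c: "(cosh t)\<^sup>2 = (sinh t)\<^sup>2 + 1" by (rule cosh_square_eq)
  define p' where "p' = cosh t *\<^sub>R p + sinh t *\<^sub>R v"
  define v' where "v' = sinh t *\<^sub>R p + cosh t *\<^sub>R v"
  have "mink p' p' = - (cosh t)\<^sup>2 + (sinh t)\<^sup>2"
    unfolding p'_def by (simp add: mink_add_left mink_add_right mink_scale_left mink_scale_right pp pv vp vv power2_eq_square)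
  then have 1: "mink p' p' = -1" using c by simp
  have 2: "mink p' v' = 0"
    unfolding p'_def v'_def by (simp add: mink_add_left mink_add_right mink_scale_left mink_scale_right pp pv vp vv)
  have "mink v' v' = - (sinh t)\<^sup>2 + (cosh t)\<^sup>2"
    unfolding v'_def by (simp add: mink_add_left mink_add_right mink_scale_left mink_scale_right pp pv vp vv power2_eq_square)
  then have 3: "mink v' v' = 1" using c by simp
  have 4: "p'$1 > 0"
    unfolding p'_def using pos_comb[OF time_bound[OF H pv vv] cosh_gt_abs_sinh[of t]] by simp
  show ?thesis using 1 2 3 4 u
    by (simp add: UT_def H3_def gflow_def p'_def v'_def)
qed

lemma gflow_0 [simp]: "gflow 0 u = u"
  by (simp add: gflow_def)

lemma gflow_add: "gflow s (gflow t u) = gflow (s + t) u"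
  by (simp add: gflow_def cosh_add sinh_add algebra_simps scaleR_add_right scaleR_add_left)

lemma gflow_deriv: "((\<lambda>t. fst (gflow t u)) has_vector_derivative snd (gflow t u)) (at t within S)"
  unfolding gflow_def fst_conv snd_conv
  by (auto intro!: derivative_eq_intros)

lemma sint_eq:
  assumes lin: "\<forall>p\<in>H3. linear (w p)"
    and V: "\<forall>x. (V has_derivative (\<lambda>h. pullback_coeffs w x \<bullet> h)) (at x)"
    and u: "u \<in> UT"
  shows "sint (\<lambda>t. w (fst (gflow t u)) (snd (gflow t u))) T
       = V (proj (fst (gflow T u))) - V (proj (fst u))"
proof -
  have H: "\<forall>s\<in>UNIV. fst (gflow s u) \<in> H3"
  proof
    fix s :: real
    have "gflow s u \<in> UT" by (rule gflow_UT[OF u])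
    then show "fst (gflow s u) \<in> H3" by (cases "gflow s u") (auto simp: UT_def)
  qed
  have d: "((\<lambda>s. V (proj (fst (gflow s u)))) has_vector_derivative w (fst (gflow t u)) (snd (gflow t u))) (at t within S)" for t S
  proof -
    have "((\<lambda>s. V (proj (fst (gflow s u)))) has_vector_derivative w (fst (gflow t u)) (snd (gflow t u))) (at t within UNIV)"
      by (rule KL[OF lin V _ _ H gflow_deriv]) auto
    then show ?thesis using has_vector_derivative_at_within by auto
  qed
  show ?thesis
  proof (cases "0 \<le> T")
    case True
    have "((\<lambda>t. w (fst (gflow t u)) (snd (gflow t u))) has_integral
        V (proj (fst (gflow T u))) - V (proj (fst (gflow 0 u)))) {0..T}"
      by (rule fundamental_theorem_of_calculus[OF True d])
    then show ?thesis using True by (simp add: sint_def integral_unique)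
  next
    case False
    have "((\<lambda>t. w (fst (gflow t u)) (snd (gflow t u))) has_integral
        V (proj (fst (gflow 0 u))) - V (proj (fst (gflow T u)))) {T..0}"
      by (rule fundamental_theorem_of_calculus) (use False d in auto)
    then show ?thesis using False by (simp add: sint_def integral_unique)
  qed
qed

lemma Phi_eq:
  assumes lin: "\<forall>p\<in>H3. linear (w p)"
    and V: "\<forall>x. (V has_derivative (\<lambda>h. pullback_coeffs w x \<bullet> h)) (at x)"
    and u: "u \<in> UT" and b: "b \<in> H3"
  shows "Phi w b T u = V (proj (fst (gflow T u))) - V (proj b)"
proof -
  have "fst u \<in> H3" using u by (auto simp: UT_def)
  then show ?thesis
    unfolding Phi_def using sint_eq[OF lin V u] int_from_eq[OF lin V b] by simp
qed

lemma view_vec_UT: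
  assumes "ideal_view D" "isometric_ident \<iota> (fst ` D)"
  shows "view_vec D \<iota> z \<in> UT"
proof -
  obtain l c where l: "lightlike_future l" and c: "c > 0" and D: "D = ideal_view_of l c"
    using assms(1) unfolding ideal_view_def by blast
  have "\<iota> z \<in> fst ` D" using assms(2) unfolding isometric_ident_def bij_betw_def by auto
  then obtain p where p: "p \<in> horosphere l c" and ip: "\<iota> z = p"
    unfolding D ideal_view_of_def by auto
  have vv: "view_vec D \<iota> z = (p, out_normal l p)"
    unfolding view_vec_def
  proof (rule the_equality)
    show "(p, out_normal l p) \<in> D \<and> fst (p, out_normal l p) = \<iota> z"
      using p ip unfolding D ideal_view_of_def by auto
  next
    fix u assume "u \<in> D \<and> fst u = \<iota> z"
    then show "u = (p, out_normal l p)" using ip unfolding D ideal_view_of_def by auto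
  qed
  have pH: "p \<in> H3" and pl: "mink p l = - c" using p by (auto simp: horosphere_def)
  have pp: "mink p p = -1" using pH by (auto simp: H3_def)
  have ll: "mink l l = 0" using l by (simp add: lightlike_future_def)
  have lp: "mink l p = - c" using pl mink_sym by metis
  have 1: "mink p (out_normal l p) = 0"
    unfolding out_normal_def using c
    by (simp add: mink_add_right mink_diff_right mink_scale_right pp pl)
  have 2: "mink (out_normal l p) (out_normal l p) = 1"
    unfolding out_normal_def using c
    by (simp add: mink_add_right mink_add_left mink_diff_left mink_diff_right mink_scale_right mink_scale_left pp pl lp ll)
  show ?thesis unfolding vv UT_def using pH 1 2 by simp
qed

theorem lemma9p3:
  fixes w :: "real^4 \<Rightarrow> real^4 \<Rightarrow> real" and b :: "real^4"
    and D E :: "((real^4) \<times> (real^4)) set"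
    and \<iota>D \<iota>E :: "complex \<Rightarrow> real^4" and d :: real
  assumes "closed_one_form w"
    and "b \<in> H3"
    and "ideal_view D"
    and "isometric_ident \<iota>D (fst ` D)"
    and "E = gflow d ` D"
    and "isometric_ident \<iota>E (fst ` E)"
    and "\<forall>z. gflow d (view_vec D \<iota>D z) = view_vec E \<iota>E (complex_of_real (exp d) * z)"
  shows "\<forall>R>0. \<forall>z. Phi w b (R + d) (view_vec D \<iota>D z)
                  = Phi w b R (view_vec E \<iota>E (complex_of_real (exp d) * z))"
proof (intro allI impI)
  fix R :: real and z :: complex
  have lin: "\<forall>p\<in>H3. linear (w p)" using assms(1) unfolding closed_one_form_def by blast
  obtain DD where dF: "\<And>x. (pullback_coeffs w has_derivative DD x) (at x)"
    and cont: "\<And>i j. continuous_on UNIV (\<lambda>x. DD x (axis j 1) $ i)"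
    and sym: "\<And>x i j. DD x (axis j 1) $ i = DD x (axis i 1) $ j"
    using assms(1) unfolding closed_one_form_def by blast
  obtain V where V: "\<forall>x. (V has_derivative (\<lambda>h. pullback_coeffs w x \<bullet> h)) (at x)"
    using poincare[OF dF cont sym] by blast
  define v where "v = view_vec D \<iota>D z"
  have vUT: "v \<in> UT" unfolding v_def by (rule view_vec_UT[OF assms(3,4)])
  have uUT: "gflow d v \<in> UT" by (rule gflow_UT[OF vUT])
  have e: "view_vec E \<iota>E (complex_of_real (exp d) * z) = gflow d v"
    using assms(7) v_def by simp
  show "Phi w b (R + d) (view_vec D \<iota>D z) = Phi w b R (view_vec E \<iota>E (complex_of_real (exp d) * z))"
    unfolding e v_def[symmetric]
    using Phi_eq[OF lin V vUT assms(2)] Phi_eq[OF lin V uUT assms(2)] gflow_add[of R d v] by simp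
qed

end
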